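(* Let $(\mathfrak g,[\cdot,\cdot]_{\mathfrak g},E)$ be an ENL algebra. Then there exists a pre-ENL algebra $(\mathfrak g,\{\cdot,\cdot\},E)$ whose sub-adjacent ENL algebra is $(\mathfrak g,[\cdot,\cdot]_{\mathfrak g},E)$ (i.e. $\{x,y\}-\{y,x\}=[x,y]_{\mathfrak g}$) if and only if there exist an ENE-representation $(W;T,\rho)$ of $(\mathfrak g,[\cdot,\cdot]_{\mathfrak g},E)$ and an invertible ENE-relative Rota–Baxter operator $K:W\to\mathfrak g$ with respect to $(W;T,\rho)$. In this case, the product $\{x,y\}_K:=K(\rho(x)K^{-1}y)$ makes $(\mathfrak g,\{\cdot,\cdot\}_K,E)$ a pre-ENL algebra.
   Context: Vector spaces are finite-dimensional over an algebraically closed field of characteristic zero. An ENL algebra is a Lie algebra with linear $E$ satisfying $E[x,y]=[x,Ey]$ for all $x,y$. An ENE-representation $(W;T,\rho)$ of $(\mathfrak g,E)$ is a representation $\rho:\mathfrak g\to\mathfrak{gl}(W)$ with linear $T$ such that $T(\rho(x)u)=\rho(Ex)u=\rho(x)(Tu)$. An ENE-relative Rota–Baxter operator is a linear $K:W\to\mathfrak g$ with $[Ku,Kv]_{\mathfrak g}=K(\rho(Ku)v-\rho(Kv)u)$ for all $u,v\in W$ and $E\circ K=K\circ T$. A pre-Lie algebra is a vector space with bilinear product $\{\cdot,\cdot\}$ satisfying $\{\{x,y\},z\}-\{x,\{y,z\}\}=\{\{y,x\},z\}-\{y,\{x,z\}\}$; a pre-ENL algebra $(\mathfrak g,\{\cdot,\cdot\},E)$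 is a pre-Lie algebra with linear $E$ such that $E\{x,y\}=\{Ex,y\}=\{x,Ey\}$ for all $x,y$; its sub-adjacent ENL algebra is $(\mathfrak g,[\cdot,\cdot],E)$ with $[x,y]=\{x,y\}-\{y,x\}$. *)

theory Defs
  imports Main "HOL-Computational_Algebra.Polynomial"
begin

definition alg_closed_field :: "'k::field itself \<Rightarrow> bool" where
  "alg_closed_field _ \<longleftrightarrow> (\<forall>p :: 'k poly. degree p > 0 \<longrightarrow> (\<exists>x. poly p x = 0))"

definition fd_vs :: "('k::field \<Rightarrow> 'v::ab_group_add \<Rightarrow> 'v) \<Rightarrow> bool" where
  "fd_vs s \<longleftrightarrow> (\<exists>B. finite_dimensional_vector_space s B)"

definition bilin :: "('k::field \<Rightarrow> 'a::ab_group_add \<Rightarrow> 'a) \<Rightarrow> ('k \<Rightarrow> 'b::ab_group_add \<Rightarrow> 'b)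
    \<Rightarrow> ('k \<Rightarrow> 'c::ab_group_add \<Rightarrow> 'c) \<Rightarrow> ('a \<Rightarrow> 'b \<Rightarrow> 'c) \<Rightarrow> bool" where
  "bilin s1 s2 s3 f \<longleftrightarrow> (\<forall>x. Vector_Spaces.linear s2 s3 (f x)) \<and> (\<forall>y. Vector_Spaces.linear s1 s3 (\<lambda>x. f x y))"

definition lie_algebra :: "('k::field \<Rightarrow> 'g::ab_group_add \<Rightarrow> 'g) \<Rightarrow> ('g \<Rightarrow> 'g \<Rightarrow> 'g) \<Rightarrow> bool" where
  "lie_algebra s br \<longleftrightarrow> vector_space s \<and> bilin s s s br \<and> (\<forall>x. br x x = 0) \<and>
     (\<forall>x y z. br x (br y z) + br y (br z x) + br z (br x y) = 0)"

definition ENL_algebra :: "('k::field \<Rightarrow> 'g::ab_group_add \<Rightarrow> 'g) \<Rightarrow> ('g \<Rightarrow> 'g \<Rightarrow> 'g) \<Rightarrow> ('g \<Rightarrow> 'g) \<Rightarrow> bool" where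
  "ENL_algebra s br E \<longleftrightarrow> lie_algebra s br \<and> Vector_Spaces.linear s s E \<and>
     (\<forall>x y. E (br x y) = br x (E y))"

definition lie_rep :: "('k::field \<Rightarrow> 'g::ab_group_add \<Rightarrow> 'g) \<Rightarrow> ('g \<Rightarrow> 'g \<Rightarrow> 'g)
    \<Rightarrow> ('k \<Rightarrow> 'w::ab_group_add \<Rightarrow> 'w) \<Rightarrow> ('g \<Rightarrow> 'w \<Rightarrow> 'w) \<Rightarrow> bool" where
  "lie_rep s br sW \<rho> \<longleftrightarrow> vector_space sW \<and> bilin s sW sW \<rho> \<and>
     (\<forall>x y u. \<rho> (br x y) u = \<rho> x (\<rho> y u) - \<rho> y (\<rho> x u))"

definition ENE_rep :: "('k::field \<Rightarrow> 'g::ab_group_add \<Rightarrow> 'g) \<Rightarrow> ('g \<Rightarrow> 'g \<Rightarrow> 'g) \<Rightarrow> ('g \<Rightarrow> 'g)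
    \<Rightarrow> ('k \<Rightarrow> 'w::ab_group_add \<Rightarrow> 'w) \<Rightarrow> ('w \<Rightarrow> 'w) \<Rightarrow> ('g \<Rightarrow> 'w \<Rightarrow> 'w) \<Rightarrow> bool" where
  "ENE_rep s br E sW T \<rho> \<longleftrightarrow> lie_rep s br sW \<rho> \<and> Vector_Spaces.linear sW sW T \<and>
     (\<forall>x u. T (\<rho> x u) = \<rho> (E x) u \<and> \<rho> (E x) u = \<rho> x (T u))"

definition ENE_RB :: "('k::field \<Rightarrow> 'g::ab_group_add \<Rightarrow> 'g) \<Rightarrow> ('g \<Rightarrow> 'g \<Rightarrow> 'g) \<Rightarrow> ('g \<Rightarrow> 'g)
    \<Rightarrow> ('k \<Rightarrow> 'w::ab_group_add \<Rightarrow> 'w) \<Rightarrow> ('w \<Rightarrow> 'w) \<Rightarrow> ('g \<Rightarrow> 'w \<Rightarrow> 'w) \<Rightarrow> ('w \<Rightarrow> 'g) \<Rightarrow> bool" where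
  "ENE_RB s br E sW T \<rho> K \<longleftrightarrow> Vector_Spaces.linear sW s K \<and>
     (\<forall>u v. br (K u) (K v) = K (\<rho> (K u) v - \<rho> (K v) u)) \<and> E \<circ> K = K \<circ> T"

definition pre_lie :: "('k::field \<Rightarrow> 'g::ab_group_add \<Rightarrow> 'g) \<Rightarrow> ('g \<Rightarrow> 'g \<Rightarrow> 'g) \<Rightarrow> bool" where
  "pre_lie s P \<longleftrightarrow> vector_space s \<and> bilin s s s P \<and>
     (\<forall>x y z. P (P x y) z - P x (P y z) = P (P y x) z - P y (P x z))"

definition pre_ENL :: "('k::field \<Rightarrow> 'g::ab_group_add \<Rightarrow> 'g) \<Rightarrow> ('g \<Rightarrow> 'g \<Rightarrow> 'g) \<Rightarrow> ('g \<Rightarrow> 'g) \<Rightarrow> bool" where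
  "pre_ENL s P E \<longleftrightarrow> pre_lie s P \<and> Vector_Spaces.linear s s E \<and>
     (\<forall>x y. E (P x y) = P (E x) y \<and> P (E x) y = P x (E y))"

definition subadjacent :: "('g::ab_group_add \<Rightarrow> 'g \<Rightarrow> 'g) \<Rightarrow> ('g \<Rightarrow> 'g \<Rightarrow> 'g) \<Rightarrow> bool" where
  "subadjacent P br \<longleftrightarrow> (\<forall>x y. P x y - P y x = br x y)"

end

theory Submission
  imports Defs
begin

lemma lin_add: "Vector_Spaces.linear s1 s2 f \<Longrightarrow> f (x + y) = f x + f y"
  by (simp add: Vector_Spaces.linear_iff)

lemma lin_diff: "Vector_Spaces.linear s1 s2 f \<Longrightarrow> f (x - y) = f x - f y"
proof -
  assume l: "Vector_Spaces.linear s1 s2 f"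
  have "f ((x - y) + y) = f (x - y) + f y" by (rule lin_add[OF l])
  then show ?thesis by (simp add: algebra_simps)
qed

lemma lin_inv:
  assumes l: "Vector_Spaces.linear s1 s2 f" and b: "bij f"
  shows "Vector_Spaces.linear s2 s1 (inv f)"
proof -
  have fi: "\<And>y. f (inv f y) = y" using b by (simp add: bij_is_surj surj_f_inv_f)
  have if1: "\<And>x. inv f (f x) = x" using b by (simp add: bij_is_inj)
  show ?thesis unfolding Vector_Spaces.linear_iff
  proof (intro conjI allI)
    show "vector_space s2" "vector_space s1" using l by (auto simp: Vector_Spaces.linear_iff)
    fix x y
    have "inv f (x + y) = inv f (f (inv f x) + f (inv f y))" by (simp add: fi)
    also have "\<dots> = inv f (f (inv f x + inv f y))" by (simp add: lin_add[OF l])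
    finally show "inv f (x + y) = inv f x + inv f y" by (simp add: if1)
  next
    fix c x
    have "inv f (s2 c x) = inv f (s2 c (f (inv f x)))" by (simp add: fi)
    also have "\<dots> = inv f (f (s1 c (inv f x)))" using l by (simp add: Vector_Spaces.linear_iff)
    finally show "inv f (s2 c x) = s1 c (inv f x)" by (simp add: if1)
  qed
qed

lemma lin_comp: "Vector_Spaces.linear s1 s2 f \<Longrightarrow> Vector_Spaces.linear s2 s3 g \<Longrightarrow>
   Vector_Spaces.linear s1 s3 (\<lambda>x. g (f x))"
  using Vector_Spaces.linear_compose[of s1 s2 f s3 g] by (simp add: o_def)

lemma part3:
  fixes s :: "'k::field \<Rightarrow> 'g::ab_group_add \<Rightarrow> 'g"
    and sW :: "'k \<Rightarrow> 'w::ab_group_add \<Rightarrow> 'w"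
  assumes enl: "ENL_algebra s br E"
    and rep: "ENE_rep s br E sW T \<rho>" and rb: "ENE_RB s br E sW T \<rho> K" and b: "bij K"
  shows "pre_ENL s (\<lambda>x y. K (\<rho> x (inv K y))) E \<and> subadjacent (\<lambda>x y. K (\<rho> x (inv K y))) br"
proof -
  define K' where "K' = inv K"
  define P where "P = (\<lambda>x y. K (\<rho> x (K' y)))"
  have fi: "\<And>y. K (K' y) = y" using b unfolding K'_def by (simp add: bij_is_surj surj_f_inv_f)
  have if1: "\<And>x. K' (K x) = x" using b unfolding K'_def by (simp add: bij_is_inj)
  have lK: "Vector_Spaces.linear sW s K" using rb by (simp add: ENE_RB_def)
  have lK': "Vector_Spaces.linear s sW K'" unfolding K'_def by (rule lin_inv[OF lK b])
  have lie: "lie_algebra s br" using enl by (simp add: ENL_algebra_def)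
  have lE: "Vector_Spaces.linear s s E" using enl by (simp add: ENL_algebra_def)
  have lr: "lie_rep s br sW \<rho>" using rep by (simp add: ENE_rep_def)
  have r1: "\<And>x. Vector_Spaces.linear sW sW (\<rho> x)" and r2: "\<And>u. Vector_Spaces.linear s sW (\<lambda>x. \<rho> x u)"
    using lr by (auto simp: lie_rep_def bilin_def)
  have rbr: "\<And>x y u. \<rho> (br x y) u = \<rho> x (\<rho> y u) - \<rho> y (\<rho> x u)" using lr by (simp add: lie_rep_def)
  have Trho: "\<And>x u. T (\<rho> x u) = \<rho> (E x) u" and rhoT: "\<And>x u. \<rho> (E x) u = \<rho> x (T u)"
    using rep by (auto simp: ENE_rep_def)
  have EK: "\<And>u. E (K u) = K (T u)" using rb unfolding ENE_RB_def by (metis comp_apply)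
  have rbK: "\<And>u v. br (K u) (K v) = K (\<rho> (K u) v - \<rho> (K v) u)" using rb by (simp add: ENE_RB_def)
  have sub: "\<And>x y. P x y - P y x = br x y"
  proof -
    fix x y
    have "br x y = br (K (K' x)) (K (K' y))" by (simp add: fi)
    also have "\<dots> = K (\<rho> x (K' y) - \<rho> y (K' x))" using rbK[of "K' x" "K' y"] by (simp add: fi)
    also have "\<dots> = P x y - P y x" by (simp add: P_def lin_diff[OF lK])
    finally show "P x y - P y x = br x y" by simp
  qed
  have TK': "\<And>y. T (K' y) = K' (E y)" using EK fi if1 by metis
  have bil: "bilin s s s P"
    unfolding bilin_def P_def
  proof (intro conjI allI)
    fix x show "Vector_Spaces.linear s s (\<lambda>y. K (\<rho> x (K' y)))"
      by (rule lin_comp[OF lin_comp[OF lK' r1] lK])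
  next
    fix y show "Vector_Spaces.linear s s (\<lambda>x. K (\<rho> x (K' y)))"
      by (rule lin_comp[OF r2 lK])
  qed
  have plid: "\<And>x y z. P (P x y) z - P x (P y z) = P (P y x) z - P y (P x z)"
  proof -
    fix x y z
    have "P (P x y) z - P (P y x) z = K (\<rho> (P x y - P y x) (K' z))"
      by (simp add: P_def lin_diff[OF lK] lin_diff[OF r2])
    also have "\<dots> = K (\<rho> x (\<rho> y (K' z)) - \<rho> y (\<rho> x (K' z)))" by (simp add: sub rbr)
    also have "\<dots> = P x (P y z) - P y (P x z)" by (simp add: P_def if1 lin_diff[OF lK])
    finally show "P (P x y) z - P x (P y z) = P (P y x) z - P y (P x z)"
      by (simp add: algebra_simps)
  qed
  have vs: "vector_space s" using lie by (simp add: lie_algebra_def)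
  have pe: "pre_ENL s P E"
    unfolding pre_ENL_def pre_lie_def
    using vs bil plid lE by (simp add: P_def EK Trho rhoT TK')
  show ?thesis using pe sub unfolding subadjacent_def P_def K'_def by simp
qed

theorem proposition7p7:
  fixes s :: "'k::field_char_0 \<Rightarrow> 'g::ab_group_add \<Rightarrow> 'g"
    and br :: "'g \<Rightarrow> 'g \<Rightarrow> 'g" and E :: "'g \<Rightarrow> 'g"
  assumes "alg_closed_field TYPE('k)"
    and "fd_vs s"
    and "ENL_algebra s br E"
  shows "((\<exists>P. pre_ENL s P E \<and> subadjacent P br) \<longrightarrow>
            (\<exists>(\<rho> :: 'g \<Rightarrow> 'g \<Rightarrow> 'g) T K. ENE_rep s br E s T \<rho> \<and> ENE_RB s br E s T \<rho> K \<and> bij K))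
       \<and> (\<forall>(sW :: 'k \<Rightarrow> 'w::ab_group_add \<Rightarrow> 'w) T \<rho> K.
            fd_vs sW \<and> ENE_rep s br E sW T \<rho> \<and> ENE_RB s br E sW T \<rho> K \<and> bij K \<longrightarrow>
            (\<exists>P. pre_ENL s P E \<and> subadjacent P br))
       \<and> (\<forall>(sW :: 'k \<Rightarrow> 'w::ab_group_add \<Rightarrow> 'w) T \<rho> K.
            fd_vs sW \<and> ENE_rep s br E sW T \<rho> \<and> ENE_RB s br E sW T \<rho> K \<and> bij K \<longrightarrow>
            pre_ENL s (\<lambda>x y. K (\<rho> x (inv K y))) E \<and> subadjacent (\<lambda>x y. K (\<rho> x (inv K y))) br)"
proof (intro conjI impI allI)
  assume "\<exists>P. pre_ENL s P E \<and> subadjacent P br"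
  then obtain P where pe: "pre_ENL s P E" and sa: "subadjacent P br" by blast
  have vs: "vector_space s" and bil: "bilin s s s P"
    and pl: "\<And>x y z. P (P x y) z - P x (P y z) = P (P y x) z - P y (P x z)"
    and lE: "Vector_Spaces.linear s s E"
    and EP: "\<And>x y. E (P x y) = P (E x) y" and EP2: "\<And>x y. P (E x) y = P x (E y)"
    using pe by (auto simp: pre_ENL_def pre_lie_def)
  have l2: "\<And>u. Vector_Spaces.linear s s (\<lambda>x. P x u)" using bil by (simp add: bilin_def)
  have sub: "\<And>x y. P x y - P y x = br x y" using sa by (simp add: subadjacent_def)
  have rep: "ENE_rep s br E s E P"
    unfolding ENE_rep_def lie_rep_def
  proof (intro conjI allI)
    fix x y u
    have "P (br x y) u = P (P x y) u - P (P y x) u" by (simp add: sub[symmetric] lin_diff[OF l2])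
    also have "\<dots> = P x (P y u) - P y (P x u)" using pl[of x y u] by (simp add: algebra_simps)
    finally show "P (br x y) u = P x (P y u) - P y (P x u)" .
  qed (use vs bil lE EP EP2 in auto)
  have rb: "ENE_RB s br E s E P id"
    unfolding ENE_RB_def using vector_space.linear_id[OF vs] sub by (simp add: id_def o_def)
  show "\<exists>(\<rho> :: 'g \<Rightarrow> 'g \<Rightarrow> 'g) T K. ENE_rep s br E s T \<rho> \<and> ENE_RB s br E s T \<rho> K \<and> bij K"
    using rep rb by blast
next
  fix sW :: "'k \<Rightarrow> 'w::ab_group_add \<Rightarrow> 'w" and T \<rho> K
  assume "fd_vs sW \<and> ENE_rep s br E sW T \<rho> \<and> ENE_RB s br E sW T \<rho> K \<and> bij K"
  then show "\<exists>P. pre_ENL s P E \<and> subadjacent P br" using part3[OF assms(3)] by blast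
next
  fix sW :: "'k \<Rightarrow> 'w::ab_group_add \<Rightarrow> 'w" and T \<rho> K
  assume "fd_vs sW \<and> ENE_rep s br E sW T \<rho> \<and> ENE_RB s br E sW T \<rho> K \<and> bij K"
  then show "pre_ENL s (\<lambda>x y. K (\<rho> x (inv K y))) E"
    using part3[OF assms(3)] by blast
next
  fix sW :: "'k \<Rightarrow> 'w::ab_group_add \<Rightarrow> 'w" and T \<rho> K
  assume "fd_vs sW \<and> ENE_rep s br E sW T \<rho> \<and> ENE_RB s br E sW T \<rho> K \<and> bij K"
  then show "subadjacent (\<lambda>x y. K (\<rho> x (inv K y))) br"
    using part3[OF assms(3)] by blast
qed

end
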